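(* Let $G$ be a discrete group, $U=\{u_1,\dots,u_n\}\subseteq G$ a finite subset, $\mathbf k\subseteq{\rm Seq}(\mathbf C)$ a $\sigma$-subring with constants $\mathbf C$, $f:\mathbf k^n\to\mathbf k$ a polynomial map with $f(0,\dots,0)=0$, and $\varphi$ the associated non-autonomous generalized polynomial cellular automaton $\varphi(s)_g=f(s_{u_1^{-1}g},\dots,s_{u_n^{-1}g})$. Equip ${\rm Seq}(\mathbf C)$ with the topology of coincidence along finite subsets of $\mathbf Z_{\ge0}$. Then: (a) $L^c$ is dense in $L$; (b) $L^{\rm per}$ is dense in $L$ if and only if $G$ is residually finite.
   Context: ${\rm Seq}(\mathbf C)$ is the ring of complex sequences $x=(x^{(t)})_{t\in\mathbf Z_{\ge0}}$ with shift $\sigma(x)^{(t)}=x^{(t+1)}$. The topology of coincidence along finite subsets: a basic neighbourhood of $x$ consists of all sequences agreeing with $x$ on a given finite set of indices $t$. The map $f$ extends to ${\rm Seq}(\mathbf C)^n\to{\rm Seq}(\mathbf C)$ and $\varphi$ to $\mathcal C(G,{\rm Seq}(\mathbf C))$ (functions $G\to{\rm Seq}(\mathbf C)$). A solution is $s\in\mathcal C(G,{\rm Seq}(\mathbf C))$ with $\sigma(s)=\varphi(s)$, i.e. $s^{(t+1)}_g=f(s^{(t)}_{u_1^{-1}g},\dots,s^{(t)}_{u_n^{-1}g})$ (with $f$ evaluated with the coefficients at step $t$). $L$ is the smallest $\sigma$-subring of ${\rm Seq}(\mathbf C)$ containing $\mathbf k$ and all values $s_g$ of all solutions; $L^c$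 the smallest one containing $\mathbf k$ and all values of solutions $s$ such that $s^{(t)}$ has finite support for every $t$. For a subgroup $H$, $s$ is $H$-periodic if $s_g=s_{gh}$ for all $g\in G,h\in H$; $L^{\rm per}$ is the smallest $\sigma$-subring containing $\mathbf k$ and all values of solutions that are $H$-periodic for some normal subgroup $H$ of finite index. *)

theory Defs
  imports Complex_Main "HOL-Algebra.Coset"
begin

text \<open>Seq(C) is modelled as the type nat => complex with pointwise ring operations.\<close>

definition sigma_subring :: "(nat \<Rightarrow> complex) set \<Rightarrow> bool" where
  "sigma_subring S \<longleftrightarrow>
     (\<lambda>t. 1) \<in> S \<and>
     (\<forall>x\<in>S. \<forall>y\<in>S. (\<lambda>t. x t + y t) \<in> S \<and> (\<lambda>t. x t * y t) \<in> S) \<and>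
     (\<forall>x\<in>S. (\<lambda>t. - x t) \<in> S) \<and>
     (\<forall>x\<in>S. (\<lambda>t. x (Suc t)) \<in> S)"

definition sigma_hull :: "(nat \<Rightarrow> complex) set \<Rightarrow> (nat \<Rightarrow> complex) set" where
  "sigma_hull A = \<Inter> {S. sigma_subring S \<and> A \<subseteq> S}"

definition has_constants :: "(nat \<Rightarrow> complex) set \<Rightarrow> bool" where
  "has_constants k \<longleftrightarrow> (\<forall>c. (\<lambda>t. c) \<in> k)"

text \<open>Polynomial maps in the variables x 0, ..., x (n-1) with coefficients in k,
  extended to Seq(C)^n (operations pointwise).\<close>
inductive_set polymaps ::
  "(nat \<Rightarrow> complex) set \<Rightarrow> nat \<Rightarrow> ((nat \<Rightarrow> nat \<Rightarrow> complex) \<Rightarrow> nat \<Rightarrow> complex) set"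
  for k :: "(nat \<Rightarrow> complex) set" and n :: nat where
  const: "c \<in> k \<Longrightarrow> (\<lambda>x. c) \<in> polymaps k n"
| var: "i < n \<Longrightarrow> (\<lambda>x. x i) \<in> polymaps k n"
| add: "p \<in> polymaps k n \<Longrightarrow> q \<in> polymaps k n \<Longrightarrow> (\<lambda>x t. p x t + q x t) \<in> polymaps k n"
| mult: "p \<in> polymaps k n \<Longrightarrow> q \<in> polymaps k n \<Longrightarrow> (\<lambda>x t. p x t * q x t) \<in> polymaps k n"

text \<open>Standing hypotheses: U = {u 0, ..., u (n-1)} a finite subset of G (listed without
  repetition), k a sigma-subring with constants C, f a polynomial map k^n -> k with f(0)=0.\<close>
definition ca_data :: "('g, 'b) monoid_scheme \<Rightarrow> nat \<Rightarrow> (nat \<Rightarrow> 'g) \<Rightarrow>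
    (nat \<Rightarrow> complex) set \<Rightarrow> ((nat \<Rightarrow> nat \<Rightarrow> complex) \<Rightarrow> nat \<Rightarrow> complex) \<Rightarrow> bool" where
  "ca_data G n u k f \<longleftrightarrow>
     (\<forall>i<n. u i \<in> carrier G) \<and> inj_on u {..<n} \<and>
     sigma_subring k \<and> has_constants k \<and>
     f \<in> polymaps k n \<and> f (\<lambda>i t. 0) = (\<lambda>t. 0)"

text \<open>s is a solution: sigma(s) = phi(s), i.e.
  s_g^(t+1) = f(s_(u_1^-1 g), ..., s_(u_n^-1 g))^(t).\<close>
definition is_solution :: "('g, 'b) monoid_scheme \<Rightarrow> (nat \<Rightarrow> 'g) \<Rightarrow>
    ((nat \<Rightarrow> nat \<Rightarrow> complex) \<Rightarrow> nat \<Rightarrow> complex) \<Rightarrow> ('g \<Rightarrow> nat \<Rightarrow> complex) \<Rightarrow> bool" where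
  "is_solution G u f s \<longleftrightarrow>
     (\<forall>g\<in>carrier G. \<forall>t. s g (Suc t) = f (\<lambda>i. s (inv\<^bsub>G\<^esub> (u i) \<otimes>\<^bsub>G\<^esub> g)) t)"

definition solution_values :: "('g, 'b) monoid_scheme \<Rightarrow> (nat \<Rightarrow> 'g) \<Rightarrow>
    ((nat \<Rightarrow> nat \<Rightarrow> complex) \<Rightarrow> nat \<Rightarrow> complex) \<Rightarrow> (('g \<Rightarrow> nat \<Rightarrow> complex) \<Rightarrow> bool)
    \<Rightarrow> (nat \<Rightarrow> complex) set" where
  "solution_values G u f P = {s g | s g. g \<in> carrier G \<and> is_solution G u f s \<and> P s}"

definition finite_index :: "('g, 'b) monoid_scheme \<Rightarrow> 'g set \<Rightarrow> bool" where
  "finite_index G H \<longleftrightarrow> finite (rcosets\<^bsub>G\<^esub> H)"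

definition periodic :: "('g, 'b) monoid_scheme \<Rightarrow> 'g set \<Rightarrow> ('g \<Rightarrow> 'c) \<Rightarrow> bool" where
  "periodic G H s \<longleftrightarrow> (\<forall>g\<in>carrier G. \<forall>h\<in>H. s g = s (g \<otimes>\<^bsub>G\<^esub> h))"

definition L_all where
  "L_all G u k f = sigma_hull (k \<union> solution_values G u f (\<lambda>s. True))"

definition L_c where
  "L_c G u k f = sigma_hull (k \<union> solution_values G u f
      (\<lambda>s. \<forall>t. finite {g \<in> carrier G. s g t \<noteq> 0}))"

definition L_per where
  "L_per G u k f = sigma_hull (k \<union> solution_values G u f
      (\<lambda>s. \<exists>H. normal H G \<and> finite_index G H \<and> periodic G H s))"

text \<open>Density for the topology of coincidence along finite subsets of indices.\<close>
definition dense_coinc :: "(nat \<Rightarrow> complex) set \<Rightarrow> (nat \<Rightarrow> complex) set \<Rightarrow> bool" where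
  "dense_coinc A B \<longleftrightarrow>
     (\<forall>x\<in>B. \<forall>F. finite F \<longrightarrow> (\<exists>y\<in>A. \<forall>t\<in>F. y t = x t))"

definition residually_finite :: "('g, 'b) monoid_scheme \<Rightarrow> bool" where
  "residually_finite G \<longleftrightarrow>
     (\<forall>g\<in>carrier G. g \<noteq> \<one>\<^bsub>G\<^esub> \<longrightarrow>
        (\<exists>H. normal H G \<and> finite_index G H \<and> g \<notin> H))"

end

theory Submission
  imports Defs
begin

lemma hull_sup: "A \<subseteq> sigma_hull A"
  unfolding sigma_hull_def by auto
lemma hull_min: "sigma_subring S \<Longrightarrow> A \<subseteq> S \<Longrightarrow> sigma_hull A \<subseteq> S"
  unfolding sigma_hull_def by auto
lemma hull_subring: "sigma_subring (sigma_hull A)"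
  unfolding sigma_subring_def
proof (intro conjI ballI)
  show "(\<lambda>t. 1) \<in> sigma_hull A" unfolding sigma_hull_def sigma_subring_def by blast
  fix x y assume x: "x \<in> sigma_hull A" and y: "y \<in> sigma_hull A"
  show "(\<lambda>t. x t + y t) \<in> sigma_hull A" "(\<lambda>t. x t * y t) \<in> sigma_hull A"
    using x y unfolding sigma_hull_def sigma_subring_def by blast+
next
  fix x assume x: "x \<in> sigma_hull A"
  show "(\<lambda>t. - x t) \<in> sigma_hull A" "(\<lambda>t. x (Suc t)) \<in> sigma_hull A"
    using x unfolding sigma_hull_def sigma_subring_def by blast+
qed

definition approx :: "(nat \<Rightarrow> complex) set \<Rightarrow> (nat \<Rightarrow> complex) \<Rightarrow> bool" where
  "approx A x \<longleftrightarrow> (\<forall>F. finite F \<longrightarrow> (\<exists>y\<in>A. \<forall>t\<in>F. y t = x t))"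

lemma approx_mem: "x \<in> A \<Longrightarrow> approx A x"
  unfolding approx_def by blast

lemma approx_bin:
  assumes cl: "\<And>a b. a \<in> A \<Longrightarrow> b \<in> A \<Longrightarrow> (\<lambda>t. op (a t) (b t)) \<in> A"
  and x: "approx A x" and y: "approx A y"
  shows "approx A (\<lambda>t. op (x t) (y t))"
  unfolding approx_def
proof (intro allI impI)
  fix F :: "nat set" assume F: "finite F"
  obtain a where a: "a \<in> A" "\<forall>t\<in>F. a t = x t" using x F unfolding approx_def by blast
  obtain b where b: "b \<in> A" "\<forall>t\<in>F. b t = y t" using y F unfolding approx_def by blast
  have "(\<lambda>t. op (a t) (b t)) \<in> A" using cl a(1) b(1) .
  moreover have "\<forall>t\<in>F. op (a t) (b t) = op (x t) (y t)" using a(2) b(2) by simp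
  ultimately show "\<exists>z\<in>A. \<forall>t\<in>F. z t = op (x t) (y t)" by (intro bexI[where x="\<lambda>t. op (a t) (b t)"]) simp_all
qed

lemma approx_un:
  assumes cl: "\<And>a. a \<in> A \<Longrightarrow> (\<lambda>t. op (a t)) \<in> A"
  and x: "approx A x"
  shows "approx A (\<lambda>t. op (x t))"
  unfolding approx_def
proof (intro allI impI)
  fix F :: "nat set" assume F: "finite F"
  obtain a where a: "a \<in> A" "\<forall>t\<in>F. a t = x t" using x F unfolding approx_def by blast
  have "(\<lambda>t. op (a t)) \<in> A" using cl a(1) .
  moreover have "\<forall>t\<in>F. op (a t) = op (x t)" using a(2) by simp
  ultimately show "\<exists>z\<in>A. \<forall>t\<in>F. z t = op (x t)" by (intro bexI[where x="\<lambda>t. op (a t)"]) simp_all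
qed

lemma approx_shift:
  assumes cl: "\<And>a. a \<in> A \<Longrightarrow> (\<lambda>t. a (Suc t)) \<in> A"
  and x: "approx A x"
  shows "approx A (\<lambda>t. x (Suc t))"
  unfolding approx_def
proof (intro allI impI)
  fix F :: "nat set" assume F: "finite F"
  have F': "finite (Suc ` F)" using F by simp
  obtain a where a: "a \<in> A" "\<forall>t\<in>Suc ` F. a t = x t" using x F' unfolding approx_def by blast
  have "(\<lambda>t. a (Suc t)) \<in> A" using cl a(1) .
  moreover have "\<forall>t\<in>F. a (Suc t) = x (Suc t)" using a(2) by simp
  ultimately show "\<exists>z\<in>A. \<forall>t\<in>F. z t = x (Suc t)" by (intro bexI[where x="\<lambda>t. a (Suc t)"]) simp_all
qed

lemma approx_subring:
  assumes S: "sigma_subring A"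
  shows "sigma_subring {x. approx A x}"
proof -
  have S': "(\<lambda>t. 1) \<in> A \<and> (\<forall>x\<in>A. \<forall>y\<in>A. (\<lambda>t. x t + y t) \<in> A \<and> (\<lambda>t. x t * y t) \<in> A) \<and>
     (\<forall>x\<in>A. (\<lambda>t. - x t) \<in> A) \<and> (\<forall>x\<in>A. (\<lambda>t. x (Suc t)) \<in> A)"
    using S unfolding sigma_subring_def .
  note one = S'[THEN conjunct1]
  note am = S'[THEN conjunct2, THEN conjunct1]
  note ng = S'[THEN conjunct2, THEN conjunct2, THEN conjunct1]
  note sf = S'[THEN conjunct2, THEN conjunct2, THEN conjunct2]
  have add: "\<And>a b. a \<in> A \<Longrightarrow> b \<in> A \<Longrightarrow> (\<lambda>t. a t + b t) \<in> A"
    by (rule conjunct1[OF bspec[OF bspec[OF am]]])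
  have mul: "\<And>a b. a \<in> A \<Longrightarrow> b \<in> A \<Longrightarrow> (\<lambda>t. a t * b t) \<in> A"
    by (rule conjunct2[OF bspec[OF bspec[OF am]]])
  have neg: "\<And>a. a \<in> A \<Longrightarrow> (\<lambda>t. - a t) \<in> A"
    by (rule bspec[OF ng])
  have sh: "\<And>a. a \<in> A \<Longrightarrow> (\<lambda>t. a (Suc t)) \<in> A"
    by (rule bspec[OF sf])
  show ?thesis unfolding sigma_subring_def mem_Collect_eq Ball_def
  proof (intro conjI allI impI)
    show "approx A (\<lambda>t. 1)" by (rule approx_mem[OF one])
  next
    fix x y assume xa: "approx A x" and ya: "approx A y"
    show "approx A (\<lambda>t. x t + y t)" by (rule approx_bin[of A "(+)", OF add xa ya])
    show "approx A (\<lambda>t. x t * y t)" by (rule approx_bin[of A "(*)", OF mul xa ya])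
  next
    fix x assume xa: "approx A x"
    show "approx A (\<lambda>t. - x t)" by (rule approx_un[of A uminus, OF neg xa])
    show "approx A (\<lambda>t. x (Suc t))" by (rule approx_shift[OF sh xa])
  qed
qed



lemma polymaps_local:
  "p \<in> polymaps k n \<Longrightarrow> (\<forall>i<n. x i t = y i t) \<Longrightarrow> p x t = p y t"
  by (induction rule: polymaps.induct) auto

fun evol :: "('g,'b) monoid_scheme \<Rightarrow> (nat \<Rightarrow> 'g) \<Rightarrow> ((nat \<Rightarrow> nat \<Rightarrow> complex) \<Rightarrow> nat \<Rightarrow> complex)
   \<Rightarrow> ('g \<Rightarrow> complex) \<Rightarrow> nat \<Rightarrow> 'g \<Rightarrow> complex" where
  "evol G u f c 0 = c"
| "evol G u f c (Suc t) = (\<lambda>h. f (\<lambda>i t'. evol G u f c t (inv\<^bsub>G\<^esub> (u i) \<otimes>\<^bsub>G\<^esub> h)) t)"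

definition soln where "soln G u f c = (\<lambda>h t. evol G u f c t h)"

lemma soln_is:
  assumes "f \<in> polymaps k n"
  shows "is_solution G u f (soln G u f c)"
  unfolding is_solution_def soln_def
proof (intro ballI allI)
  fix g t
  show "evol G u f c (Suc t) g = f (\<lambda>i t'. evol G u f c t' (inv\<^bsub>G\<^esub> u i \<otimes>\<^bsub>G\<^esub> g)) t"
    using polymaps_local[OF assms, of "\<lambda>i t'. evol G u f c t (inv\<^bsub>G\<^esub> u i \<otimes>\<^bsub>G\<^esub> g)" t
       "\<lambda>i t'. evol G u f c t' (inv\<^bsub>G\<^esub> u i \<otimes>\<^bsub>G\<^esub> g)"] by simp
qed

lemma soln_0: "soln G u f c h 0 = c h" unfolding soln_def by simp

fun dep :: "('g,'b) monoid_scheme \<Rightarrow> (nat \<Rightarrow> 'g) \<Rightarrow> nat \<Rightarrow> 'g \<Rightarrow> nat \<Rightarrow> 'g set" where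
  "dep G u n h 0 = {h}"
| "dep G u n h (Suc t) = (\<Union>i<n. dep G u n (inv\<^bsub>G\<^esub> (u i) \<otimes>\<^bsub>G\<^esub> h) t)"

lemma finite_dep: "finite (dep G u n h t)"
  by (induction t arbitrary: h) auto

lemma zero_loc:
  assumes "ca_data G n u k f" "\<forall>i<n. x i t = 0"
  shows "f x t = 0"
proof -
  have fp: "f \<in> polymaps k n" and f0: "f (\<lambda>i t. 0) = (\<lambda>t. 0)" using assms(1) unfolding ca_data_def by auto
  have "f x t = f (\<lambda>i t. 0) t" using polymaps_local[OF fp, of x t "\<lambda>i t. 0"] assms(2) by simp
  thus ?thesis using f0 by simp
qed

context group begin

lemma dep_carrier:
  assumes "\<forall>i<n. u i \<in> carrier G" "h \<in> carrier G"
  shows "dep G u n h t \<subseteq> carrier G"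
  using assms(2)
proof (induction t arbitrary: h)
  case 0 thus ?case by simp
next
  case (Suc t)
  have "\<And>i. i < n \<Longrightarrow> dep G u n (inv (u i) \<otimes> h) t \<subseteq> carrier G"
    using Suc assms(1) by simp
  thus ?case by auto
qed

lemma agree:
  assumes fp: "f \<in> polymaps k n" and u: "\<forall>i<n. u i \<in> carrier G"
    and s: "is_solution G u f s" and s': "is_solution G u f s'"
  shows "h \<in> carrier G \<Longrightarrow> (\<forall>x\<in>dep G u n h t. s x 0 = s' x 0) \<Longrightarrow> s h t = s' h t"
proof (induction t arbitrary: h)
  case 0 thus ?case by simp
next
  case (Suc t)
  have "\<forall>i<n. s (inv (u i) \<otimes> h) t = s' (inv (u i) \<otimes> h) t"
  proof (intro allI impI)
    fix i assume i: "i < n"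
    have c: "inv (u i) \<otimes> h \<in> carrier G" using i u Suc.prems(1) by simp
    have d: "\<forall>x\<in>dep G u n (inv (u i) \<otimes> h) t. s x 0 = s' x 0"
    proof
      fix x assume "x \<in> dep G u n (inv (u i) \<otimes> h) t"
      hence "x \<in> dep G u n h (Suc t)" using i by (simp only: dep.simps) blast
      thus "s x 0 = s' x 0" using Suc.prems(2) by blast
    qed
    show "s (inv (u i) \<otimes> h) t = s' (inv (u i) \<otimes> h) t" by (rule Suc.IH[OF c d])
  qed
  hence e: "f (\<lambda>i. s (inv (u i) \<otimes> h)) t = f (\<lambda>i. s' (inv (u i) \<otimes> h)) t"
    by (rule polymaps_local[OF fp])
  have "s h (Suc t) = f (\<lambda>i. s (inv (u i) \<otimes> h)) t"
    using s Suc.prems(1) unfolding is_solution_def by blast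
  moreover have "s' h (Suc t) = f (\<lambda>i. s' (inv (u i) \<otimes> h)) t"
    using s' Suc.prems(1) unfolding is_solution_def by blast
  ultimately show ?case using e by simp
qed

lemma finite_supp:
  assumes cd: "ca_data G n u k f" and fin: "finite {h \<in> carrier G. c h \<noteq> 0}"
  shows "finite {h \<in> carrier G. evol G u f c t h \<noteq> 0}"
proof (induction t)
  case 0 thus ?case using fin by simp
next
  case (Suc t)
  have u: "\<forall>i<n. u i \<in> carrier G" using cd unfolding ca_data_def by auto
  have "{h \<in> carrier G. evol G u f c (Suc t) h \<noteq> 0}
     \<subseteq> (\<Union>i<n. (\<lambda>x. u i \<otimes> x) ` {h \<in> carrier G. evol G u f c t h \<noteq> 0})"
  proof
    fix h assume h: "h \<in> {h \<in> carrier G. evol G u f c (Suc t) h \<noteq> 0}"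
    have "\<not> (\<forall>i<n. evol G u f c t (inv (u i) \<otimes> h) = 0)"
      using zero_loc[OF cd, of "\<lambda>i t'. evol G u f c t (inv (u i) \<otimes> h)" t] h by auto
    then obtain i where i: "i < n" "evol G u f c t (inv (u i) \<otimes> h) \<noteq> 0" by blast
    have "h = u i \<otimes> (inv (u i) \<otimes> h)" using i u h by (simp add: m_assoc[symmetric])
    moreover have "inv (u i) \<otimes> h \<in> carrier G" using i u h by simp
    ultimately show "h \<in> (\<Union>i<n. (\<lambda>x. u i \<otimes> x) ` {h \<in> carrier G. evol G u f c t h \<noteq> 0})"
      using i by blast
  qed
  moreover have "finite (\<Union>i<n. (\<lambda>x. u i \<otimes> x) ` {h \<in> carrier G. evol G u f c t h \<noteq> 0})"
    using Suc by simp
  ultimately show ?case by (rule finite_subset)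
qed

end


context group begin

lemma coset_inter:
  assumes M: "subgroup M G" and N: "subgroup N G" and a: "a \<in> carrier G"
  shows "(M \<inter> N) #> a = (M #> a) \<inter> (N #> a)"
proof (intro equalityI subsetI)
  fix z assume "z \<in> (M \<inter> N) #> a"
  then obtain h where h: "h \<in> M \<inter> N" "z = h \<otimes> a" unfolding r_coset_def by auto
  have "z \<in> M #> a" unfolding r_coset_def using h by auto
  moreover have "z \<in> N #> a" unfolding r_coset_def using h by auto
  ultimately show "z \<in> (M #> a) \<inter> (N #> a)" by simp
next
  fix z assume z: "z \<in> (M #> a) \<inter> (N #> a)"
  obtain m where m: "m \<in> M" "z = m \<otimes> a" using z unfolding r_coset_def by auto
  obtain p where p: "p \<in> N" "z = p \<otimes> a" using z unfolding r_coset_def by auto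
  have mc: "m \<in> carrier G" using m(1) M subgroup.mem_carrier by metis
  have pc: "p \<in> carrier G" using p(1) N subgroup.mem_carrier by metis
  have "m \<otimes> a = p \<otimes> a" using m(2) p(2) by simp
  hence "m = p" using mc pc a by simp
  hence "m \<in> M \<inter> N" using m(1) p(1) by simp
  thus "z \<in> (M \<inter> N) #> a" using m(2) unfolding r_coset_def by auto
qed

lemma finite_index_inter:
  assumes M: "subgroup M G" and N: "subgroup N G"
    and fM: "finite_index G M" and fN: "finite_index G N"
  shows "finite_index G (M \<inter> N)"
proof -
  have "rcosets (M \<inter> N) \<subseteq> (\<lambda>p. fst p \<inter> snd p) ` ((rcosets M) \<times> (rcosets N))"
  proof
    fix X assume "X \<in> rcosets (M \<inter> N)"
    then obtain a where a: "a \<in> carrier G" "X = (M \<inter> N) #> a" unfolding RCOSETS_def by blast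
    have "X = fst (M #> a, N #> a) \<inter> snd (M #> a, N #> a)" using coset_inter[OF M N a(1)] a(2) by simp
    moreover have "(M #> a, N #> a) \<in> (rcosets M) \<times> (rcosets N)"
      using a(1) unfolding RCOSETS_def by blast
    ultimately show "X \<in> (\<lambda>p. fst p \<inter> snd p) ` ((rcosets M) \<times> (rcosets N))" by blast
  qed
  moreover have "finite ((\<lambda>p. fst p \<inter> snd p) ` ((rcosets M) \<times> (rcosets N)))"
    using fM fN unfolding finite_index_def by simp
  ultimately show ?thesis unfolding finite_index_def by (rule finite_subset)
qed

lemma carrier_normal: "carrier G \<lhd> G"
  using normal_inv_iff subgroup_self by auto

lemma carrier_finite_index: "finite_index G (carrier G)"
proof -
  have "rcosets (carrier G) \<subseteq> {carrier G}"
    unfolding RCOSETS_def using coset_join2[OF _ subgroup_self] by auto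
  thus ?thesis unfolding finite_index_def using finite_subset by blast
qed

lemma separate:
  assumes rf: "residually_finite G"
  shows "finite X \<Longrightarrow> X \<subseteq> carrier G \<Longrightarrow> \<one> \<notin> X \<Longrightarrow>
     \<exists>H. H \<lhd> G \<and> finite_index G H \<and> H \<inter> X = {}"
proof (induction X rule: finite_induct)
  case empty
  have "carrier G \<inter> {} = {}" by simp
  thus ?case using carrier_normal carrier_finite_index by blast
next
  case (insert x X)
  have X1: "X \<subseteq> carrier G" "\<one> \<notin> X" using insert.prems by auto
  obtain H1 where H1: "H1 \<lhd> G" "finite_index G H1" "H1 \<inter> X = {}" using insert.IH[OF X1] by blast
  have x1: "x \<in> carrier G" "x \<noteq> \<one>" using insert.prems by auto
  have "\<exists>H. H \<lhd> G \<and> finite_index G H \<and> x \<notin> H"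
    using rf x1 unfolding residually_finite_def by blast
  then obtain H2 where H2: "H2 \<lhd> G" "finite_index G H2" "x \<notin> H2" by blast
  have "H1 \<inter> H2 \<lhd> G" using normal_subgroup_intersect[OF H1(1) H2(1)] .
  moreover have "finite_index G (H1 \<inter> H2)"
    using finite_index_inter[OF normal_imp_subgroup[OF H1(1)] normal_imp_subgroup[OF H2(1)] H1(2) H2(2)] .
  moreover have "(H1 \<inter> H2) \<inter> insert x X = {}" using H1(3) H2(3) by blast
  ultimately show ?case by blast
qed

lemma evol_periodic:
  assumes fp: "f \<in> polymaps k n" and u: "\<forall>i<n. u i \<in> carrier G"
    and H: "subgroup H G"
    and c: "\<forall>g\<in>carrier G. \<forall>x\<in>H. c (g \<otimes> x) = c g"
  shows "\<forall>g\<in>carrier G. \<forall>x\<in>H. evol G u f c t (g \<otimes> x) = evol G u f c t g"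
proof (induction t)
  case 0 thus ?case using c by simp
next
  case (Suc t)
  show ?case
  proof (intro ballI)
    fix g x assume g: "g \<in> carrier G" and x: "x \<in> H"
    have xc: "x \<in> carrier G" using subgroup.mem_carrier[OF H x] .
    have "\<forall>i<n. evol G u f c t (inv (u i) \<otimes> (g \<otimes> x)) = evol G u f c t (inv (u i) \<otimes> g)"
    proof (intro allI impI)
      fix i assume i: "i < n"
      have uc: "inv (u i) \<in> carrier G" using i u by simp
      have ic: "inv (u i) \<otimes> g \<in> carrier G" using uc g by simp
      have e1: "inv (u i) \<otimes> (g \<otimes> x) = (inv (u i) \<otimes> g) \<otimes> x" using m_assoc[OF uc g xc] by simp
      have e2: "evol G u f c t ((inv (u i) \<otimes> g) \<otimes> x) = evol G u f c t (inv (u i) \<otimes> g)"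
        using bspec[OF bspec[OF Suc ic] x] .
      show "evol G u f c t (inv (u i) \<otimes> (g \<otimes> x)) = evol G u f c t (inv (u i) \<otimes> g)"
        unfolding e1 by (rule e2)
    qed
    hence "f (\<lambda>i t'. evol G u f c t (inv (u i) \<otimes> (g \<otimes> x))) t = f (\<lambda>i t'. evol G u f c t (inv (u i) \<otimes> g)) t"
      by (rule polymaps_local[OF fp])
    thus "evol G u f c (Suc t) (g \<otimes> x) = evol G u f c (Suc t) g" by simp
  qed
qed

end


lemma dense_hull2:
  assumes "\<forall>x\<in>B. approx (sigma_hull A) x"
  shows "dense_coinc (sigma_hull A) (sigma_hull B)"
proof -
  have "sigma_subring {x. approx (sigma_hull A) x}" by (rule approx_subring[OF hull_subring])
  moreover have "B \<subseteq> {x. approx (sigma_hull A) x}" using assms by blast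
  ultimately have "sigma_hull B \<subseteq> {x. approx (sigma_hull A) x}" by (rule hull_min)
  thus ?thesis unfolding dense_coinc_def approx_def by blast
qed

context group begin

lemma trunc:
  assumes fp: "f \<in> polymaps k n" and u: "\<forall>i<n. u i \<in> carrier G"
    and s: "is_solution G u f s" and g: "g \<in> carrier G"
    and c: "\<forall>x\<in>(\<Union>t\<in>F. dep G u n g t). c x = s x 0"
  shows "\<forall>t\<in>F. soln G u f c g t = s g t"
proof
  fix t assume t: "t \<in> F"
  have "\<forall>x\<in>dep G u n g t. soln G u f c x 0 = s x 0"
  proof
    fix x assume "x \<in> dep G u n g t"
    hence "x \<in> (\<Union>t\<in>F. dep G u n g t)" using t by blast
    from bspec[OF c this] show "soln G u f c x 0 = s x 0" by (simp add: soln_0)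
  qed
  thus "soln G u f c g t = s g t" using agree[OF fp u soln_is[OF fp] s g] by blast
qed

lemma memH:
  assumes H: "subgroup H G" and z: "z \<in> carrier G" and y: "y \<in> H"
  shows "(z \<otimes> y \<in> H) = (z \<in> H)"
proof
  assume a: "z \<otimes> y \<in> H"
  have yc: "y \<in> carrier G" using subgroup.mem_carrier[OF H y] .
  have "z = (z \<otimes> y) \<otimes> inv y" using z yc by (simp add: m_assoc)
  moreover have "(z \<otimes> y) \<otimes> inv y \<in> H" using subgroup.m_closed[OF H a subgroup.m_inv_closed[OF H y]] .
  ultimately show "z \<in> H" by simp
next
  assume "z \<in> H" thus "z \<otimes> y \<in> H" using subgroup.m_closed[OF H _ y] by blast
qed

lemma part_a:
  assumes cd: "ca_data G n u k f"
  shows "dense_coinc (L_c G u k f) (L_all G u k f)"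
proof -
  have fp: "f \<in> polymaps k n" and u: "\<forall>i<n. u i \<in> carrier G" using cd unfolding ca_data_def by auto
  define A where "A = k \<union> solution_values G u f (\<lambda>s. \<forall>t. finite {g \<in> carrier G. s g t \<noteq> 0})"
  have "\<forall>x\<in>k \<union> solution_values G u f (\<lambda>s. True). approx (sigma_hull A) x"
  proof
    fix x assume x: "x \<in> k \<union> solution_values G u f (\<lambda>s. True)"
    show "approx (sigma_hull A) x"
    proof (cases "x \<in> k")
      case True
      thus ?thesis using hull_sup[of A] unfolding A_def by (intro approx_mem) blast
    next
      case False
      then obtain s g where xs: "x = s g" and g: "g \<in> carrier G" and s: "is_solution G u f s"
        using x unfolding solution_values_def by blast
      show ?thesis unfolding approx_def
      proof (intro allI impI)
        fix F :: "nat set" assume F: "finite F"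
        define D where "D = (\<Union>t\<in>F. dep G u n g t)"
        have Dfin: "finite D" unfolding D_def by (intro finite_UN_I F finite_dep)
        define c where "c = (\<lambda>h. if h \<in> D then s h 0 else 0)"
        have cD: "\<forall>x\<in>D. c x = s x 0" unfolding c_def by simp
        have ag: "\<forall>t\<in>F. soln G u f c g t = s g t"
          using trunc[OF fp u s g] cD unfolding D_def by blast
        have fin0: "finite {h \<in> carrier G. c h \<noteq> 0}"
          by (rule finite_subset[OF _ Dfin]) (auto simp: c_def)
        have fin: "\<forall>t. finite {h \<in> carrier G. soln G u f c h t \<noteq> 0}"
          unfolding soln_def using finite_supp[OF cd fin0] by blast
        have "soln G u f c g \<in> A"
          unfolding A_def solution_values_def using g soln_is[OF fp] fin by blast
        hence "soln G u f c g \<in> sigma_hull A" using hull_sup by blast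
        thus "\<exists>y\<in>sigma_hull A. \<forall>t\<in>F. y t = x t" using ag xs by blast
      qed
    qed
  qed
  thus ?thesis unfolding L_c_def L_all_def A_def by (rule dense_hull2)
qed

end


context group begin

lemma part_b1:
  assumes rf: "residually_finite G" and cd: "ca_data G n u k f"
  shows "dense_coinc (L_per G u k f) (L_all G u k f)"
proof -
  have fp: "f \<in> polymaps k n" and u: "\<forall>i<n. u i \<in> carrier G" using cd unfolding ca_data_def by auto
  define A where "A = k \<union> solution_values G u f (\<lambda>s. \<exists>H. normal H G \<and> finite_index G H \<and> periodic G H s)"
  have "\<forall>x\<in>k \<union> solution_values G u f (\<lambda>s. True). approx (sigma_hull A) x"
  proof
    fix x assume x: "x \<in> k \<union> solution_values G u f (\<lambda>s. True)"
    show "approx (sigma_hull A) x"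
    proof (cases "x \<in> k")
      case True
      thus ?thesis using hull_sup[of A] unfolding A_def by (intro approx_mem) blast
    next
      case False
      then obtain s g where xs: "x = s g" and g: "g \<in> carrier G" and s: "is_solution G u f s"
        using x unfolding solution_values_def by blast
      show ?thesis unfolding approx_def
      proof (intro allI impI)
        fix F :: "nat set" assume F: "finite F"
        define D where "D = (\<Union>t\<in>F. dep G u n g t)"
        have Dfin: "finite D" unfolding D_def by (intro finite_UN_I F finite_dep)
        have Dc: "D \<subseteq> carrier G" unfolding D_def using dep_carrier[OF u g] by blast
        define X where "X = (\<lambda>p. inv (fst p) \<otimes> snd p) ` {p \<in> D \<times> D. fst p \<noteq> snd p}"
        have Xfin: "finite X" unfolding X_def using Dfin by simp
        have Xc: "X \<subseteq> carrier G"
        proof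
          fix z assume "z \<in> X"
          then obtain a b where ab: "a \<in> D" "b \<in> D" "z = inv a \<otimes> b" unfolding X_def by auto
          have "a \<in> carrier G" "b \<in> carrier G" using ab Dc by auto
          thus "z \<in> carrier G" using ab(3) by simp
        qed
        have X1: "\<one> \<notin> X"
        proof
          assume "\<one> \<in> X"
          then obtain a b where ab: "a \<in> D" "b \<in> D" "a \<noteq> b" "\<one> = inv a \<otimes> b"
            unfolding X_def by auto
          have ac: "a \<in> carrier G" and bc: "b \<in> carrier G" using ab Dc by auto
          have "b = a \<otimes> (inv a \<otimes> b)" using ac bc by (simp add: m_assoc[symmetric])
          also have "\<dots> = a" using ab(4)[symmetric] ac by simp
          finally show False using ab(3) by simp
        qed
        obtain H where H: "H \<lhd> G" "finite_index G H" "H \<inter> X = {}"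
          using separate[OF rf Xfin Xc X1] by blast
        have Hs: "subgroup H G" using normal_imp_subgroup[OF H(1)] .
        define c where "c = (\<lambda>h. if \<exists>a\<in>D. inv a \<otimes> h \<in> H then s (SOME a. a \<in> D \<and> inv a \<otimes> h \<in> H) 0 else 0)"
        have cD: "\<forall>x\<in>D. c x = s x 0"
        proof
          fix y assume y: "y \<in> D"
          have yc: "y \<in> carrier G" using y Dc by auto
          have ex: "\<exists>a\<in>D. inv a \<otimes> y \<in> H"
            using y yc subgroup.one_closed[OF Hs] by (intro bexI[of _ y]) simp_all
          have "(SOME a. a \<in> D \<and> inv a \<otimes> y \<in> H) = y"
          proof (rule some_equality)
            show "y \<in> D \<and> inv y \<otimes> y \<in> H" using y yc subgroup.one_closed[OF Hs] by simp
          next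
            fix a assume a: "a \<in> D \<and> inv a \<otimes> y \<in> H"
            show "a = y"
            proof (rule ccontr)
              assume "a \<noteq> y"
              hence "inv a \<otimes> y \<in> X" unfolding X_def using a y
                by (intro image_eqI[of _ _ "(a, y)"]) auto
              thus False using a H(3) by blast
            qed
          qed
          thus "c y = s y 0" unfolding c_def using ex by simp
        qed
        have ag: "\<forall>t\<in>F. soln G u f c g t = s g t"
          using trunc[OF fp u s g] cD unfolding D_def by blast
        have cper: "\<forall>h\<in>carrier G. \<forall>y\<in>H. c (h \<otimes> y) = c h"
        proof (intro ballI)
          fix h y assume h: "h \<in> carrier G" and y: "y \<in> H"
          have yc: "y \<in> carrier G" using subgroup.mem_carrier[OF Hs y] .
          have P: "\<And>a. (a \<in> D \<and> inv a \<otimes> (h \<otimes> y) \<in> H) = (a \<in> D \<and> inv a \<otimes> h \<in> H)"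
          proof -
            fix a
            show "(a \<in> D \<and> inv a \<otimes> (h \<otimes> y) \<in> H) = (a \<in> D \<and> inv a \<otimes> h \<in> H)"
            proof (cases "a \<in> D")
              case True
              hence ac: "a \<in> carrier G" using Dc by auto
              have "inv a \<otimes> (h \<otimes> y) = (inv a \<otimes> h) \<otimes> y" using ac h yc by (simp add: m_assoc)
              thus ?thesis using memH[OF Hs _ y, of "inv a \<otimes> h"] ac h True by simp
            qed simp
          qed
          have P2: "(\<exists>a\<in>D. inv a \<otimes> (h \<otimes> y) \<in> H) = (\<exists>a\<in>D. inv a \<otimes> h \<in> H)"
            using P by blast
          show "c (h \<otimes> y) = c h" unfolding c_def P2 by (simp only: P)
        qed
        define s' where "s' = soln G u f c"
        have s'per: "periodic G H s'"
          unfolding periodic_def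
        proof (intro ballI)
          fix h y assume h: "h \<in> carrier G" and y: "y \<in> H"
          show "s' h = s' (h \<otimes> y)"
          proof
            fix t
            show "s' h t = s' (h \<otimes> y) t"
              unfolding s'_def soln_def
              using bspec[OF bspec[OF evol_periodic[OF fp u Hs cper, of t] h] y] by simp
          qed
        qed
        have "s' g \<in> A"
          unfolding A_def solution_values_def using g soln_is[OF fp] s'per H(1,2) unfolding s'_def by blast
        hence "s' g \<in> sigma_hull A" using hull_sup by blast
        thus "\<exists>y\<in>sigma_hull A. \<forall>t\<in>F. y t = x t" using ag xs unfolding s'_def by blast
      qed
    qed
  qed
  thus ?thesis unfolding L_per_def L_all_def A_def by (rule dense_hull2)
qed

end


context group begin

lemma part_b2:
  assumes nrf: "\<not> residually_finite G"
  shows "\<exists>n u k f. ca_data G n u k f \<and> \<not> dense_coinc (L_per G u k f) (L_all G u k f)"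
proof -
  obtain g0 where g0: "g0 \<in> carrier G" "g0 \<noteq> \<one>"
    and gH: "\<And>H. H \<lhd> G \<Longrightarrow> finite_index G H \<Longrightarrow> g0 \<in> H"
    using nrf unfolding residually_finite_def by blast
  define u :: "nat \<Rightarrow> 'a" where "u = (\<lambda>i. if i = 0 then \<one> else inv g0)"
  define k :: "(nat \<Rightarrow> complex) set" where "k = range (\<lambda>c t. c)"
  define f :: "(nat \<Rightarrow> nat \<Rightarrow> complex) \<Rightarrow> nat \<Rightarrow> complex" where "f = (\<lambda>x t. x 0 t + (- 1) * x 1 t)"
  have ig0: "inv g0 \<in> carrier G" using g0 by simp
  have ig1: "inv g0 \<noteq> \<one>" using g0 by simp
  have kc: "\<And>c. (\<lambda>t. c) \<in> k" unfolding k_def by (rule rangeI)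
  have kE: "\<And>x. x \<in> k \<Longrightarrow> \<exists>c. x = (\<lambda>t. c)" unfolding k_def by blast
  have ks: "sigma_subring k"
    unfolding sigma_subring_def
  proof (intro conjI ballI)
    show "(\<lambda>t. 1) \<in> k" by (rule kc)
  next
    fix x y assume "x \<in> k" "y \<in> k"
    then obtain a b where ab: "x = (\<lambda>t. a)" "y = (\<lambda>t. b)" using kE by blast
    show "(\<lambda>t. x t + y t) \<in> k" unfolding ab using kc[of "a + b"] by simp
    show "(\<lambda>t. x t * y t) \<in> k" unfolding ab using kc[of "a * b"] by simp
  next
    fix x assume "x \<in> k"
    then obtain a where ab: "x = (\<lambda>t. a)" using kE by blast
    show "(\<lambda>t. - x t) \<in> k" unfolding ab using kc[of "- a"] by simp
    show "(\<lambda>t. x (Suc t)) \<in> k" unfolding ab using kc[of "a"] by simp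
  qed
  have fpoly: "f \<in> polymaps k 2"
    using polymaps.add[OF polymaps.var[of 0 2 k] polymaps.mult[OF polymaps.const[OF kc[of "- 1"]] polymaps.var[of 1 2 k]]]
    unfolding f_def by simp
  have cd: "ca_data G 2 u k f"
    unfolding ca_data_def
  proof (intro conjI)
    show "\<forall>i<2. u i \<in> carrier G" unfolding u_def using ig0 by simp
    have "{..<2::nat} = {0, 1}" by auto
    thus "inj_on u {..<2}" unfolding u_def using ig1 by (simp add: inj_on_def)
    show "has_constants k" unfolding has_constants_def using kc by blast
    show "f (\<lambda>i t. 0) = (\<lambda>t. 0)" unfolding f_def by simp
  qed (use ks fpoly in auto)
  define S where "S = {x :: nat \<Rightarrow> complex. \<forall>t. x (Suc t) = x (Suc 0)}"
  have Ss: "sigma_subring S"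
    unfolding sigma_subring_def S_def mem_Collect_eq Ball_def
  proof (intro conjI allI impI)
    fix x y :: "nat \<Rightarrow> complex" and t :: nat assume x: "\<forall>t. x (Suc t) = x (Suc 0)" and y: "\<forall>t. y (Suc t) = y (Suc 0)"
    show "x (Suc t) + y (Suc t) = x (Suc 0) + y (Suc 0)" using x[rule_format, of t] y[rule_format, of t] by simp
    show "x (Suc t) * y (Suc t) = x (Suc 0) * y (Suc 0)" using x[rule_format, of t] y[rule_format, of t] by simp
  next
    fix x :: "nat \<Rightarrow> complex" and t :: nat assume x: "\<forall>t. x (Suc t) = x (Suc 0)"
    show "- x (Suc t) = - x (Suc 0)" using x[rule_format, of t] by simp
    have "x (Suc (Suc t)) = x (Suc 0)" "x (Suc (Suc 0)) = x (Suc 0)" using x[rule_format, of "Suc t"] x[rule_format, of "Suc 0"] by simp_all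
    thus "x (Suc (Suc t)) = x (Suc (Suc 0))" by simp
  qed simp
  have kS: "k \<subseteq> S" unfolding S_def using kE by auto
  have perS: "solution_values G u f (\<lambda>s. \<exists>H. normal H G \<and> finite_index G H \<and> periodic G H s) \<subseteq> S"
  proof
    fix x assume "x \<in> solution_values G u f (\<lambda>s. \<exists>H. normal H G \<and> finite_index G H \<and> periodic G H s)"
    then obtain s h H where xs: "x = s h" and h: "h \<in> carrier G" and s: "is_solution G u f s"
      and H: "H \<lhd> G" "finite_index G H" "periodic G H s"
      unfolding solution_values_def by blast
    have g0H: "g0 \<in> H" using gH[OF H(1,2)] .
    have yH: "inv h \<otimes> g0 \<otimes> h \<in> H" using normal.inv_op_closed1[OF H(1) h g0H] .
    have "h \<otimes> (inv h \<otimes> g0 \<otimes> h) = g0 \<otimes> h" using h g0 by (simp add: m_assoc[symmetric])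
    moreover have "s h = s (h \<otimes> (inv h \<otimes> g0 \<otimes> h))"
      using bspec[OF bspec[OF H(3)[unfolded periodic_def] h] yH] .
    ultimately have sg: "s (g0 \<otimes> h) = s h" by simp
    have "\<forall>t. s h (Suc t) = 0"
    proof
      fix t
      have "s h (Suc t) = f (\<lambda>i. s (inv (u i) \<otimes> h)) t" using spec[OF bspec[OF s[unfolded is_solution_def] h], of t] .
      also have "\<dots> = s h t + (- 1) * s (g0 \<otimes> h) t" unfolding f_def u_def using h g0 by simp
      also have "\<dots> = 0" unfolding sg by simp
      finally show "s h (Suc t) = 0" .
    qed
    thus "x \<in> S" unfolding S_def xs by simp
  qed
  have LS: "L_per G u k f \<subseteq> S" unfolding L_per_def
    by (rule hull_min[OF Ss]) (use kS perS in blast)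
  define c where "c = (\<lambda>h. if h = \<one> then (1::complex) else 0)"
  define s' where "s' = soln G u f c"
  have ev1: "\<And>h. h \<in> carrier G \<Longrightarrow> evol G u f c (Suc 0) h = c h + (- 1) * c (g0 \<otimes> h)"
    unfolding f_def u_def using g0 by simp
  have ev2: "\<And>h. h \<in> carrier G \<Longrightarrow> evol G u f c (Suc (Suc 0)) h = evol G u f c (Suc 0) h + (- 1) * evol G u f c (Suc 0) (g0 \<otimes> h)"
    unfolding f_def u_def using g0 by simp
  have gi: "g0 \<otimes> inv g0 = \<one>" using g0 by simp
  have a1: "evol G u f c (Suc 0) (inv g0) = - 1"
    using ev1[OF ig0] gi ig1 unfolding c_def by simp
  have a0: "evol G u f c (Suc 0) \<one> = 1"
    using ev1[OF one_closed] g0 unfolding c_def by simp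
  have a2: "evol G u f c (Suc (Suc 0)) (inv g0) = - 2"
    using ev2[OF ig0] gi a1 a0 by simp
  have yL: "s' (inv g0) \<in> L_all G u k f"
  proof -
    have "s' (inv g0) \<in> solution_values G u f (\<lambda>s. True)"
      unfolding solution_values_def s'_def using ig0 soln_is[OF fpoly] by blast
    thus ?thesis unfolding L_all_def using hull_sup by blast
  qed
  have "\<not> dense_coinc (L_per G u k f) (L_all G u k f)"
  proof
    assume d: "dense_coinc (L_per G u k f) (L_all G u k f)"
    have fin: "finite {Suc 0, Suc (Suc 0)}" by simp
    obtain z where z: "z \<in> L_per G u k f" "\<forall>t\<in>{Suc 0, Suc (Suc 0)}. z t = s' (inv g0) t"
      using mp[OF spec[OF bspec[OF d[unfolded dense_coinc_def] yL], of "{Suc 0, Suc (Suc 0)}"] fin] by blast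
    have "z \<in> S" using z(1) LS by blast
    hence "\<forall>t. z (Suc t) = z (Suc 0)" unfolding S_def by simp
    hence "z (Suc (Suc 0)) = z (Suc 0)" by (rule spec)
    moreover have "z (Suc 0) = - 1" using z(2) a1 unfolding s'_def soln_def by simp
    moreover have "z (Suc (Suc 0)) = - 2" using z(2) a2 unfolding s'_def soln_def by simp
    ultimately show False by simp
  qed
  thus ?thesis using cd by blast
qed

end

theorem proposition1p6:
  fixes G :: "('g, 'b) monoid_scheme"
  assumes "group G"
  shows "(\<forall>n u k f. ca_data G n u k f \<longrightarrow> dense_coinc (L_c G u k f) (L_all G u k f))
       \<and> (residually_finite G \<longleftrightarrow>
            (\<forall>n u k f. ca_data G n u k f \<longrightarrow> dense_coinc (L_per G u k f) (L_all G u k f)))"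
proof -
  interpret group G by (rule assms)
  have a: "\<forall>n u k f. ca_data G n u k f \<longrightarrow> dense_coinc (L_c G u k f) (L_all G u k f)"
    using part_a by blast
  have b: "residually_finite G \<longleftrightarrow>
            (\<forall>n u k f. ca_data G n u k f \<longrightarrow> dense_coinc (L_per G u k f) (L_all G u k f))"
  proof
    assume rf: "residually_finite G"
    show "\<forall>n u k f. ca_data G n u k f \<longrightarrow> dense_coinc (L_per G u k f) (L_all G u k f)"
      using part_b1[OF rf] by blast
  next
    assume h: "\<forall>n u k f. ca_data G n u k f \<longrightarrow> dense_coinc (L_per G u k f) (L_all G u k f)"
    show "residually_finite G"
    proof (rule ccontr)
      assume "\<not> residually_finite G"
      from part_b2[OF this] obtain n u k f where "ca_data G n u k f"
        "\<not> dense_coinc (L_per G u k f) (L_all G u k f)" by blast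
      thus False using h by blast
    qed
  qed
  show ?thesis using a b by blast
qed

end
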